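(* Let $n\in\mathbb{N}=\{0,1,2,\dots\}$, $a,b\in\mathbb{C}$ with $b\notin\mathbb{Z}^-=\{-1,-2,-3,\dots\}$. Then \[ \frac{1}{2n+b+2}\sum_{j=0}^{n}\sum_{i=0}^{j}\frac{\binom{2n+a+2}{i}}{\binom{2n+b+1}{j}} =\sum_{k=0}^{n}\frac{1}{(k+1)\binom{2k+b+2}{k+1}}\left(\binom{2k+a}{k}+\frac{b\sum_{j=0}^{k-1}\binom{2k+a}{j}}{k+b+1}\right). \]
   Context: For $x\in\mathbb{C}$ and $i\in\mathbb{N}$, the binomial coefficient is $\binom{x}{i}=\frac{x(x-1)\cdots(x-i+1)}{i!}$ (with $\binom{x}{0}=1$); in particular for $m,i\in\mathbb{N}$, $\binom{-m}{i}=(-1)^i\binom{m+i-1}{i}$. Empty sums are $0$. *)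

theory Defs
  imports Complex_Main
begin

end

theory Submission
  imports Defs
begin

lemma alg_atoms:
  fixes x y m P c H u v p q Y Ym Yp :: complex
  assumes nz: "u \<noteq> 0" "v \<noteq> 0" "p \<noteq> 0" "q \<noteq> 0" "Y \<noteq> 0" "Ym \<noteq> 0" "Yp \<noteq> 0" "H \<noteq> 0"
  and d: "u = y - 1 - m" "v = y - m" "p = m + 1" "q = m + 2" "Y = y" "Ym = y - 1" "Yp = y + 1"
  shows "1/(q*(Yp*Y*Ym*H/(u*p*q))) * ((x-2-m)*c/p + (y-2*(m+1)-1)*(P+c)/u) - 1/(p*(Yp*Y*Ym*H/(u*v*p)))*(c + (y-2*m-1)*P/v)
     = (P+c+(x-2-m)*c/p + 2*(P+c)+P)/(Y*Ym*H/(u*p))/Yp - (P+c)/H/Ym"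
proof -
  have "1/(q*(Yp*Y*Ym*H/(u*p*q))) * ((x-2-m)*c/p + (y-2*(m+1)-1)*(P+c)/u) - 1/(p*(Yp*Y*Ym*H/(u*v*p)))*(c + (y-2*m-1)*P/v)
     = ((x-2-m)*c*u + (y-2*(m+1)-1)*(P+c)*p - (c*v + (y-2*m-1)*P)*u)/(Yp*Y*Ym*H)"
    using nz by (simp add: field_simps)
  also have "... = ((P+c+(x-2-m)*c/p + 2*(P+c)+P)*u*p - (P+c)*Y*Yp)/(Yp*Y*Ym*H)"
  proof -
    have "(x-2-m)*c*u + (y-2*(m+1)-1)*(P+c)*p - (c*v + (y-2*m-1)*P)*u = (P+c+(x-2-m)*c/p + 2*(P+c)+P)*u*p - (P+c)*Y*Yp"
      using nz(3) unfolding d by (simp add: field_simps)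
    then show ?thesis by simp
  qed
  also have "... = (P+c+(x-2-m)*c/p + 2*(P+c)+P)/(Y*Ym*H/(u*p))/Yp - (P+c)/H/Ym"
    using nz by (simp add: field_simps)
  finally show ?thesis .
qed

lemma alg2:
  fixes x y m P c c1 H C1 C2 C3 C4 C5 :: complex
  assumes nz: "y - 1 - m \<noteq> 0" "y - m \<noteq> 0" "m + 1 \<noteq> 0" "m + 2 \<noteq> 0" "y \<noteq> 0" "y - 1 \<noteq> 0" "y + 1 \<noteq> 0" "H \<noteq> 0"
  and e1: "(y-1-m) * C1 = (y-1) * H"
  and e2: "(y-m) * C2 = y * C1"
  and e3: "(m+1) * C3 = y * C1"
  and e4: "(m+1) * C4 = (y+1) * C2"
  and e5: "(m+2) * C5 = (y+1) * C3"
  and e6: "(m+1) * c1 = (x-2-m) * c"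
  shows "1/((m+2)*C5) * (c1 + (y-2*(m+1)-1)*(P+c)/(y-(m+1))) - 1/((m+1)*C4)*(c + (y-2*m-1)*P/(y-m))
     = (P+c+c1 + 2*(P+c)+P)/C3/(y+1) - (P+c)/H/(y-1)"
proof -
  have C2: "C2 = y*(y-1)*H/((y-1-m)*(y-m))"
  proof (rule eq_divide_imp)
    show "(y-1-m)*(y-m) \<noteq> 0" using nz by simp
    have "C2*((y-1-m)*(y-m)) = ((y-m)*C2)*(y-1-m)" by (simp only: mult_ac)
    also have "... = (y*C1)*(y-1-m)" by (simp only: e2)
    also have "... = y*((y-1-m)*C1)" by (simp only: mult_ac)
    also have "... = y*((y-1)*H)" by (simp only: e1)
    also have "... = y*(y-1)*H" by (simp only: mult_ac)
    finally show "C2*((y-1-m)*(y-m)) = y*(y-1)*H" .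
  qed
  have C3: "C3 = y*(y-1)*H/((y-1-m)*(m+1))"
  proof (rule eq_divide_imp)
    show "(y-1-m)*(m+1) \<noteq> 0" using nz by simp
    have "C3*((y-1-m)*(m+1)) = ((m+1)*C3)*(y-1-m)" by (simp only: mult_ac)
    also have "... = (y*C1)*(y-1-m)" by (simp only: e3)
    also have "... = y*((y-1-m)*C1)" by (simp only: mult_ac)
    also have "... = y*((y-1)*H)" by (simp only: e1)
    also have "... = y*(y-1)*H" by (simp only: mult_ac)
    finally show "C3*((y-1-m)*(m+1)) = y*(y-1)*H" .
  qed
  have C4: "C4 = (y+1)*y*(y-1)*H/((y-1-m)*(y-m)*(m+1))"
  proof (rule eq_divide_imp)
    show "(y-1-m)*(y-m)*(m+1) \<noteq> 0" using nz by simp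
    have "C4*((y-1-m)*(y-m)*(m+1)) = ((m+1)*C4)*((y-1-m)*(y-m))" by (simp only: mult_ac)
    also have "... = (y+1)*C2*((y-1-m)*(y-m))" by (simp only: e4)
    also have "... = (y+1)*(C2*((y-1-m)*(y-m)))" by (simp only: mult_ac)
    also have "... = (y+1)*(y*(y-1)*H)" using C2 nz by simp
    finally show "C4*((y-1-m)*(y-m)*(m+1)) = (y+1)*y*(y-1)*H" by (simp only: mult_ac)
  qed
  have C5: "C5 = (y+1)*y*(y-1)*H/((y-1-m)*(m+1)*(m+2))"
  proof (rule eq_divide_imp)
    show "(y-1-m)*(m+1)*(m+2) \<noteq> 0" using nz by simp
    have "C5*((y-1-m)*(m+1)*(m+2)) = ((m+2)*C5)*((y-1-m)*(m+1))" by (simp only: mult_ac)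
    also have "... = (y+1)*C3*((y-1-m)*(m+1))" by (simp only: e5)
    also have "... = (y+1)*(C3*((y-1-m)*(m+1)))" by (simp only: mult_ac)
    also have "... = (y+1)*(y*(y-1)*H)" using C3 nz by simp
    finally show "C5*((y-1-m)*(m+1)*(m+2)) = (y+1)*y*(y-1)*H" by (simp only: mult_ac)
  qed
  have c1: "c1 = (x-2-m)*c/(m+1)" using e6 nz by (simp add: field_simps)
  have y2: "y - (m+1) = y - 1 - m" by simp
  show ?thesis unfolding C3 C4 C5 c1 y2
    using alg_atoms[where u="y-1-m" and v="y-m" and p="m+1" and q="m+2" and Y=y and Ym="y-1" and Yp="y+1" and y=y and m=m and H=H and x=x and P=P and c=c] nz
    by simp
qed

lemma gbin_nz:
  fixes a :: complex
  assumes "\<forall>i<k. a \<noteq> of_nat i"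
  shows "a gchoose k \<noteq> 0"
  using assms by (auto simp: gbinomial_prod_rev)

lemma pascal_sum:
  fixes w :: complex
  shows "(\<Sum>i<Suc n. (w+1) gchoose i) = (\<Sum>i<Suc n. w gchoose i) + (\<Sum>i<n. w gchoose i)"
proof (induction n)
  case 0
  then show ?case by simp
next
  case (Suc n)
  have "(\<Sum>i<Suc (Suc n). (w+1) gchoose i) = (\<Sum>i<Suc n. (w+1) gchoose i) + ((w+1) gchoose Suc n)"
    by simp
  also have "... = (\<Sum>i<Suc n. w gchoose i) + (\<Sum>i<n. w gchoose i) + (w gchoose n) + (w gchoose Suc n)"
    using Suc.IH gbinomial_Suc_Suc[of w n] by simp
  also have "... = (\<Sum>i<Suc (Suc n). w gchoose i) + (\<Sum>i<Suc n. w gchoose i)"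
    by simp
  finally show ?case .
qed

definition Tn :: "nat \<Rightarrow> complex \<Rightarrow> complex \<Rightarrow> complex" where
  "Tn m x y = (1 / (y + 1)) * (\<Sum>j<m. \<Sum>i=0..j. (x gchoose i) / (y gchoose j))"

definition ff :: "nat \<Rightarrow> complex \<Rightarrow> complex \<Rightarrow> complex" where
  "ff m x y = (1 / ((of_nat m + 1) * ((y + 1) gchoose (m + 1)))) *
     (((x - 2) gchoose m) + (y - 2 * of_nat m - 1) * (\<Sum>j<m. (x - 2) gchoose j) / (y - of_nat m))"

lemma Tn_Suc: "Tn (Suc m) x y = Tn m x y + (\<Sum>i<Suc m. x gchoose i) / (y gchoose m) / (y + 1)"
proof -
  have e: "(\<Sum>i=0..m. (x gchoose i)/(y gchoose m)) = (\<Sum>i<Suc m. x gchoose i)/(y gchoose m)"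
    by (simp add: sum_divide_distrib atLeast0AtMost lessThan_Suc_atMost)
  have "Tn (Suc m) x y = 1/(y+1) * (\<Sum>j<m. \<Sum>i=0..j. (x gchoose i) / (y gchoose j))
      + 1/(y+1) * (\<Sum>i=0..m. (x gchoose i)/(y gchoose m))"
    unfolding Tn_def sum.lessThan_Suc by (simp only: distrib_left)
  also have "... = Tn m x y + (\<Sum>i<Suc m. x gchoose i) / (y gchoose m) / (y + 1)"
    unfolding e Tn_def by simp
  finally show ?thesis .
qed

lemma key:
  fixes x y :: complex
  assumes h: "\<forall>i\<le>2*M+1. y + 1 - of_nat i \<noteq> 0"
  shows "m \<le> M \<Longrightarrow> Tn (Suc m) x y - Tn m (x-2) (y-2) = ff m x y"
proof (induction m)
  case 0
  then show ?case by (simp add: Tn_def ff_def)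
next
  case (Suc m)
  define mm :: complex where "mm = of_nat m"
  define P where "P = (\<Sum>j<m. (x - 2) gchoose j)"
  define c where "c = (x - 2) gchoose m"
  define c1 where "c1 = (x - 2) gchoose (Suc m)"
  define H where "H = (y - 2) gchoose m"
  define C1 where "C1 = (y - 1) gchoose m"
  define C2 where "C2 = y gchoose m"
  define C3 where "C3 = y gchoose (Suc m)"
  define C4 where "C4 = (y + 1) gchoose (Suc m)"
  define C5 where "C5 = (y + 1) gchoose (Suc (Suc m))"
  have hi: "y + 1 - of_nat i \<noteq> 0" if "i \<le> 2*M+1" for i using h that by blast
  have n1: "y - 1 - mm \<noteq> 0" using hi[of "m+2"] Suc.prems by (simp add: mm_def algebra_simps)
  have n2: "y - mm \<noteq> 0" using hi[of "m+1"] Suc.prems by (simp add: mm_def algebra_simps)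
  have n3: "mm + 1 \<noteq> 0" "mm + 2 \<noteq> 0"
    using of_nat_neq_0[of m, where 'a=complex] of_nat_neq_0[of "Suc m", where 'a=complex]
    unfolding mm_def by (simp_all add: add_ac)
  have n5: "y \<noteq> 0" using hi[of 1] Suc.prems by simp
  have n6: "y - 1 \<noteq> 0" using hi[of 2] Suc.prems by (simp add: algebra_simps)
  have n7: "y + 1 \<noteq> 0" using hi[of 0] by simp
  have nH: "H \<noteq> 0" unfolding H_def
  proof (rule gbin_nz, intro allI impI)
    fix i assume "i < m"
    then have "y + 1 - of_nat (i+3) \<noteq> 0" using hi[of "i+3"] Suc.prems by simp
    then show "y - 2 \<noteq> of_nat i" by (simp add: algebra_simps)
  qed
  have e1: "(y-1-mm) * C1 = (y-1) * H"
    using gbinomial_absorb_comp[of "y-1" m] unfolding C1_def H_def mm_def by (simp add: algebra_simps)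
  have e2: "(y-mm) * C2 = y * C1"
    using gbinomial_absorb_comp[of "y" m] unfolding C1_def C2_def mm_def by simp
  have e3: "(mm+1) * C3 = y * C1"
    using gbinomial_absorption[of m y] unfolding C1_def C3_def mm_def by (simp add: add.commute)
  have e4: "(mm+1) * C4 = (y+1) * C2"
    using gbinomial_absorption[of m "y+1"] unfolding C2_def C4_def mm_def by (simp add: add.commute)
  have e5: "(mm+2) * C5 = (y+1) * C3"
    using gbinomial_absorption[of "Suc m" "y+1"] unfolding C3_def C5_def mm_def by (simp add: add.commute)
  have e6: "(mm+1) * c1 = (x-2-mm) * c"
    using gbinomial_absorption[of m "x-2"] gbinomial_absorb_comp[of "x-2" m] unfolding c_def c1_def mm_def
    by (simp add: add.commute)
  note A = alg2[OF n1 n2 n3 n5 n6 n7 nH e1 e2 e3 e4 e5 e6, of P]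
  have IH: "Tn (Suc m) x y - Tn m (x-2) (y-2) = ff m x y" using Suc.IH Suc.prems by simp
  have T1: "Tn (Suc (Suc m)) x y = Tn (Suc m) x y + (\<Sum>i<Suc (Suc m). x gchoose i) / C3 / (y + 1)"
    unfolding C3_def by (rule Tn_Suc)
  have T2: "Tn (Suc m) (x-2) (y-2) = Tn m (x-2) (y-2) + (P + c) / H / (y - 1)"
    using Tn_Suc[of m "x-2" "y-2"] unfolding P_def c_def H_def by (simp add: algebra_simps)
  have x1: "x - 1 + 1 = x" "x - 2 + 1 = x - 1" by simp_all
  have S1: "(\<Sum>i<Suc (Suc m). x gchoose i) = P+c+c1 + 2*(P+c)+P"
  proof -
    have h1: "(\<Sum>i<Suc (Suc m). x gchoose i) = (\<Sum>i<Suc (Suc m). (x-1) gchoose i) + (\<Sum>i<Suc m. (x-1) gchoose i)"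
      using pascal_sum[of "x-1" "Suc m"] unfolding x1 .
    have h2: "(\<Sum>i<Suc (Suc m). (x-1) gchoose i) = (\<Sum>i<Suc (Suc m). (x-2) gchoose i) + (\<Sum>i<Suc m. (x-2) gchoose i)"
      using pascal_sum[of "x-2" "Suc m"] unfolding x1 .
    have h3: "(\<Sum>i<Suc m. (x-1) gchoose i) = (\<Sum>i<Suc m. (x-2) gchoose i) + (\<Sum>i<m. (x-2) gchoose i)"
      using pascal_sum[of "x-2" "m"] unfolding x1 .
    have h4: "(\<Sum>i<Suc m. (x-2) gchoose i) = P + c" unfolding P_def c_def by simp
    have h5: "(\<Sum>i<Suc (Suc m). (x-2) gchoose i) = P + c + c1" unfolding P_def c_def c1_def by simp
    show ?thesis unfolding h1 h2 h3 h4 h5 by (simp add: P_def)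
  qed
  have F0: "ff m x y = 1/((mm+1)*C4) * (c + (y-2*mm-1)*P/(y-mm))"
    unfolding ff_def mm_def C4_def c_def P_def by simp
  have F1: "ff (Suc m) x y = 1/((mm+2)*C5) * (c1 + (y-2*(mm+1)-1)*(P+c)/(y-(mm+1)))"
    unfolding ff_def mm_def C5_def c1_def P_def c_def by (simp add: add_ac)
  show ?case unfolding T1 T2 S1 F1 using IH F0 A by (simp add: algebra_simps)
qed

lemma bnz:
  fixes b :: complex
  assumes "\<forall>m::nat. b \<noteq> - of_nat (Suc m)" "i < K"
  shows "b + of_nat K - of_nat i \<noteq> 0"
proof -
  obtain s where K: "K = Suc (i + s)" using less_imp_Suc_add[OF assms(2)] by blast
  have e: "b + of_nat K - of_nat i = b + of_nat (Suc s)" unfolding K by simp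
  have "b \<noteq> - of_nat (Suc s)" using assms(1) by blast
  then have "b + of_nat (Suc s) \<noteq> 0" by (metis add.commute add_eq_0_iff)
  then show ?thesis unfolding e .
qed

lemma outer:
  fixes a b :: complex
  assumes hb: "\<forall>m::nat. b \<noteq> - of_nat (Suc m)"
  shows "Tn (Suc n) (2 * of_nat n + a + 2) (2 * of_nat n + b + 1)
       = (\<Sum>k\<le>n. ff k (2 * of_nat k + a + 2) (2 * of_nat k + b + 1))"
proof (induction n)
  case 0
  have "Tn (Suc 0) (a + 2) (b + 1) - Tn 0 (a + 2 - 2) (b + 1 - 2) = ff 0 (a + 2) (b + 1)"
  proof (rule key[where M=0])
    show "\<forall>i\<le>2 * 0 + 1. b + 1 + 1 - of_nat i \<noteq> 0"
    proof (intro allI impI)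
      fix i :: nat assume "i \<le> 2*0+1"
      then have "b + of_nat 2 - of_nat i \<noteq> 0" using bnz[OF hb, of i 2] by simp
      then show "b + 1 + 1 - of_nat i \<noteq> 0" by (simp add: algebra_simps)
    qed
  qed simp
  then show ?case by (simp add: Tn_def)
next
  case (Suc n)
  define X :: complex where "X = 2 * of_nat (Suc n) + a + 2"
  define Y :: complex where "Y = 2 * of_nat (Suc n) + b + 1"
  have K: "Tn (Suc (Suc n)) X Y - Tn (Suc n) (X - 2) (Y - 2) = ff (Suc n) X Y"
  proof (rule key[where M="Suc n"])
    show "\<forall>i\<le>2 * Suc n + 1. Y + 1 - of_nat i \<noteq> 0"
    proof (intro allI impI)
      fix i :: nat assume "i \<le> 2 * Suc n + 1"
      then have "b + of_nat (2 * Suc n + 2) - of_nat i \<noteq> 0" using bnz[OF hb, of i "2 * Suc n + 2"] by simp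
      then show "Y + 1 - of_nat i \<noteq> 0" unfolding Y_def by (simp add: algebra_simps)
    qed
  qed simp
  have X2: "X - 2 = 2 * of_nat n + a + 2" unfolding X_def by (simp add: algebra_simps)
  have Y2: "Y - 2 = 2 * of_nat n + b + 1" unfolding Y_def by (simp add: algebra_simps)
  have "Tn (Suc (Suc n)) X Y = (\<Sum>k\<le>n. ff k (2 * of_nat k + a + 2) (2 * of_nat k + b + 1)) + ff (Suc n) X Y"
    using K Suc.IH unfolding X2 Y2 by (simp add: algebra_simps)
  then show ?case unfolding X_def Y_def by simp
qed

theorem theorem1:
  fixes n :: nat and a b :: complex
  assumes "\<forall>m::nat. b \<noteq> - of_nat (Suc m)"
  shows "(1 / (2 * of_nat n + b + 2)) *
           (\<Sum>j=0..n. \<Sum>i=0..j. ((2 * of_nat n + a + 2) gchoose i) / ((2 * of_nat n + b + 1) gchoose j))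
       = (\<Sum>k=0..n. (1 / ((of_nat k + 1) * ((2 * of_nat k + b + 2) gchoose (k + 1)))) *
           (((2 * of_nat k + a) gchoose k)
            + b * (\<Sum>j<k. (2 * of_nat k + a) gchoose j) / (of_nat k + b + 1)))"
proof -
  have L: "(1 / (2 * of_nat n + b + 2)) *
           (\<Sum>j=0..n. \<Sum>i=0..j. ((2 * of_nat n + a + 2) gchoose i) / ((2 * of_nat n + b + 1) gchoose j))
        = Tn (Suc n) (2 * of_nat n + a + 2) (2 * of_nat n + b + 1)"
    unfolding Tn_def atLeast0AtMost lessThan_Suc_atMost by (simp add: add_ac)
  have R: "ff k (2 * of_nat k + a + 2) (2 * of_nat k + b + 1) =
       (1 / ((of_nat k + 1) * ((2 * of_nat k + b + 2) gchoose (k + 1)))) *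
           (((2 * of_nat k + a) gchoose k)
            + b * (\<Sum>j<k. (2 * of_nat k + a) gchoose j) / (of_nat k + b + 1))" for k
  proof -
    have 1: "2 * of_nat k + a + 2 - 2 = 2 * of_nat k + a" by simp
    have 2: "2 * of_nat k + b + 1 + 1 = 2 * of_nat k + b + 2" by simp
    have 3: "2 * of_nat k + b + 1 - 2 * of_nat k - 1 = b" by simp
    have 4: "2 * of_nat k + b + 1 - of_nat k = of_nat k + b + 1" by simp
    show ?thesis unfolding ff_def 1 2 3 4 ..
  qed
  show ?thesis unfolding L outer[OF assms] by (simp only: R atLeast0AtMost)
qed

end
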